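(* For every integer $L\geq 0$, \[ \sum_{j=-\infty}^{\infty} \left(\frac{j}{3}\right) q^{\binom{j-1}{2}} {2L \brack L+j}_q =\begin{cases} \dfrac{(-1;q^3)_{L-1}}{(-1;q)_{L-1}}\, q^{L-1}\,\dfrac{1-q^3}{1-q}\,(1-q^L), & L>0,\\[2mm] 0, & L=0,\end{cases} \] where $\binom{j-1}{2}=\frac{(j-1)(j-2)}{2}$.
   Context: For a variable $a$ and integer $n\ge 0$, $(a;q)_n=(1-a)(1-aq)\cdots(1-aq^{n-1})$ (with $(a;q)_0=1$). The $q$-binomial coefficient is ${A \brack B}_q=\frac{(q;q)_A}{(q;q)_B(q;q)_{A-B}}$ if $0\le B\le A$ are integers, and $0$ otherwise. $\left(\frac{j}{3}\right)$ is the Legendre symbol modulo 3: it equals $1$ if $j\equiv 1 \pmod 3$, $-1$ if $j\equiv -1\pmod 3$, and $0$ if $3\mid j$. *)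

theory Defs
  imports Complex_Main "HOL-Number_Theory.Number_Theory"
begin

definition qpoch :: "complex \<Rightarrow> complex \<Rightarrow> nat \<Rightarrow> complex" where
  "qpoch a q n = (\<Prod>i<n. (1 - a * q ^ i))"

definition qbinom :: "complex \<Rightarrow> int \<Rightarrow> int \<Rightarrow> complex" where
  "qbinom q A B = (if 0 \<le> B \<and> B \<le> A
     then qpoch q q (nat A) / (qpoch q q (nat B) * qpoch q q (nat (A - B)))
     else 0)"

end

theory Submission
  imports Defs
begin

fun gb :: "complex \<Rightarrow> nat \<Rightarrow> nat \<Rightarrow> complex" where
  "gb q 0 k = (if k = 0 then 1 else 0)"
| "gb q (Suc N) k = (if k = 0 then 1 else gb q N k + q ^ (Suc N - k) * gb q N (k - 1))"

lemma gb_zero: "N < k \<Longrightarrow> gb q N k = 0"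
  by (induction N arbitrary: k) auto

lemma gb_N0[simp]: "gb q N 0 = 1"
  by (cases N) auto

lemma gb_SS: "gb q (Suc N) (Suc k) = gb q N (Suc k) + q ^ (N - k) * gb q N k"
  by simp

declare gb.simps(2)[simp del]

lemma gb_ratio: "0 < k \<Longrightarrow> (1 - q ^ k) * gb q N k = (1 - q ^ (Suc N - k)) * gb q N (k - 1)"
proof (induction N arbitrary: k)
  case 0
  then show ?case by (cases "k = 1") auto
next
  case (Suc N)
  show ?case
  proof (cases "k = 1")
    case True
    have ih: "(1 - q) * gb q N 1 = 1 - q ^ N" using Suc.IH[of 1] by simp
    have "(1 - q ^ k) * gb q (Suc N) k = (1 - q) * gb q N 1 + (1 - q) * q ^ N"
      using True gb_SS[of q N 0] by (simp add: algebra_simps)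
    also have "\<dots> = 1 - q ^ Suc N" using ih by (simp add: algebra_simps)
    finally show ?thesis using True by simp
  next
    case False
    with Suc.prems have k2: "k \<ge> 2" by simp
    show ?thesis
    proof (cases "k \<le> Suc N")
      case True
      have ih: "(1 - q ^ (k - 1)) * gb q N (k - 1) = (1 - q ^ (Suc N - (k - 1))) * gb q N (k - 2)"
      proof -
        have "k - 1 - 1 = k - 2" by simp
        moreover have "0 < k - 1" using k2 by simp
        ultimately show ?thesis using Suc.IH[of "k - 1"] by metis
      qed
      have ih2: "(1 - q ^ k) * gb q N k = (1 - q ^ (Suc N - k)) * gb q N (k - 1)"
        using Suc.IH[of k] k2 by simp
      have "k + (Suc N - k) = Suc N" using True by simp
      then have e1: "q ^ k * q ^ (Suc N - k) = q ^ Suc N" by (metis power_add)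
      have "(Suc (Suc N) - k) + (k - 1) = Suc N" using True k2 by simp
      then have e2: "q ^ (Suc (Suc N) - k) * q ^ (k - 1) = q ^ Suc N" by (metis power_add)
      have e3: "Suc N - (k - 1) = Suc (Suc N) - k" using True k2 by simp
      have gk: "gb q (Suc N) k = gb q N k + q ^ (Suc N - (k - 1) - 1) * gb q N (k - 1)"
        using k2 True gb_SS[of q N "k - 1"] by (cases k) auto
      have gk1: "gb q (Suc N) (k - 1) = gb q N (k - 1) + q ^ (Suc (Suc N) - k) * gb q N (k - 2)"
        using k2 gb_SS[of q N "k - 2"] by (cases k) (auto simp: numeral_2_eq_2 Suc_diff_Suc)
      have gk': "gb q (Suc N) k = gb q N k + q ^ (Suc N - k) * gb q N (k - 1)"
        using gk k2 True by (simp add: Suc_diff_le)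
      have "(1 - q ^ k) * gb q (Suc N) k = (1 - q ^ k) * gb q N k + (1 - q ^ k) * (q ^ (Suc N - k) * gb q N (k - 1))"
        unfolding gk' by (simp only: distrib_left)
      also have "\<dots> = (1 - q ^ (Suc N - k)) * gb q N (k - 1) + (1 - q ^ k) * (q ^ (Suc N - k) * gb q N (k - 1))"
        by (simp only: ih2)
      also have "\<dots> = (1 - q ^ (Suc N - k) + q ^ (Suc N - k) - q ^ k * q ^ (Suc N - k)) * gb q N (k - 1)"
        by (simp add: algebra_simps)
      also have "\<dots> = (1 - q ^ Suc N) * gb q N (k - 1)"
        by (simp only: e1) simp
      also have "\<dots> = (1 - q ^ (Suc (Suc N) - k) + q ^ (Suc (Suc N) - k) - q ^ (Suc (Suc N) - k) * q ^ (k - 1)) * gb q N (k - 1)"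
        by (simp only: e2) simp
      also have "\<dots> = (1 - q ^ (Suc (Suc N) - k)) * gb q N (k - 1) + q ^ (Suc (Suc N) - k) * ((1 - q ^ (k - 1)) * gb q N (k - 1))"
        by (simp add: algebra_simps)
      also have "\<dots> = (1 - q ^ (Suc (Suc N) - k)) * gb q N (k - 1) + q ^ (Suc (Suc N) - k) * ((1 - q ^ (Suc (Suc N) - k)) * gb q N (k - 2))"
        using ih e3 by simp
      also have "\<dots> = (1 - q ^ (Suc (Suc N) - k)) * gb q (Suc N) (k - 1)"
        unfolding gk1 by (simp add: algebra_simps)
      finally show ?thesis .
    next
      case False
      then show ?thesis using gb_zero[of "Suc N" k] gb_zero[of "Suc N" "k - 1"]
        by (cases "k = Suc (Suc N)") auto
    qed
  qed
qed

lemma gb_pascal2: "gb q (Suc N) (Suc k) = q ^ Suc k * gb q N (Suc k) + gb q N k"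
  using gb_ratio[of "Suc k" q N] gb_SS[of q N k] by (simp add: algebra_simps)

lemma qpoch_Suc: "qpoch a q (Suc n) = qpoch a q n * (1 - a * q ^ n)"
  by (simp add: qpoch_def)

lemma gb_prod: "k \<le> N \<Longrightarrow> gb q N k * qpoch q q k * qpoch q q (N - k) = qpoch q q N"
proof (induction N arbitrary: k)
  case 0
  then show ?case by (simp add: qpoch_def)
next
  case (Suc N)
  show ?case
  proof (cases k)
    case 0
    then show ?thesis by (simp add: qpoch_def)
  next
    case (Suc k')
    show ?thesis
    proof (cases "k' = N")
      case True
      have g: "gb q (Suc N) k = gb q N N" using True Suc gb_zero[of N "Suc N"] gb_SS[of q N N] by simp
      have i: "gb q N N * qpoch q q N = qpoch q q N" using Suc.IH[of N] by (simp add: qpoch_def)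
      have "gb q (Suc N) k * qpoch q q k * qpoch q q (Suc N - k) = (gb q N N * qpoch q q N) * (1 - q * q ^ N)"
        using True Suc g by (simp add: qpoch_Suc qpoch_def[of q q 0])
      then show ?thesis using i by (simp add: qpoch_Suc)
    next
      case False
      define d where "d = N - Suc k'"
      have d: "N = k' + Suc d" using False Suc Suc.prems unfolding d_def by simp
      have i1: "gb q N (Suc k') * qpoch q q (Suc k') * qpoch q q d = qpoch q q N"
        using Suc.IH[of "Suc k'"] d by simp
      have i2: "gb q N k' * qpoch q q k' * qpoch q q (Suc d) = qpoch q q N"
        using Suc.IH[of k'] d by simp
      have g: "gb q (Suc N) k = gb q N (Suc k') + q ^ (Suc d) * gb q N k'"
        using Suc d gb_SS[of q N k'] by simp
      have "gb q (Suc N) k * qpoch q q k * qpoch q q (Suc N - k)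
          = (gb q N (Suc k') * qpoch q q (Suc k') * qpoch q q d) * (1 - q * q ^ d)
            + q ^ Suc d * (gb q N k' * qpoch q q k' * qpoch q q (Suc d)) * (1 - q * q ^ k')"
        unfolding g using Suc d by (simp add: qpoch_Suc algebra_simps)
      also have "\<dots> = qpoch q q N * (1 - q * q ^ d) + q ^ Suc d * qpoch q q N * (1 - q * q ^ k')"
        by (simp only: i1 i2)
      also have "\<dots> = qpoch q q N * (1 - q ^ Suc d * q ^ Suc k')"
        by (simp add: algebra_simps)
      also have "\<dots> = qpoch q q N * (1 - q * q ^ N)"
      proof -
        have "q ^ Suc d * q ^ Suc k' = q * q ^ N"
          unfolding d by (simp add: power_add)
        then show ?thesis by simp
      qed
      finally show ?thesis by (simp add: qpoch_Suc)
    qed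
  qed
qed


definition tri :: "int \<Rightarrow> nat" where "tri m = nat (m * (m + 1) div 2)"

lemma tri_nonneg: "0 \<le> m * (m + 1)" for m :: int
proof (cases "m \<ge> 0")
  case True then show ?thesis by simp
next
  case False then have "m + 1 \<le> 0" by simp
  then show ?thesis using False by (simp add: mult_nonpos_nonpos)
qed

lemma tri_int: "int (tri m) = m * (m + 1) div 2"
  unfolding tri_def using tri_nonneg[of m] by simp

lemma tri_step: "int (tri (m + 1)) = int (tri m) + m + 1"
proof -
  have "(m + 1) * (m + 1 + 1) = m * (m + 1) + 2 * (m + 1)" by (simp add: algebra_simps)
  then have "(m + 1) * (m + 1 + 1) div 2 = m * (m + 1) div 2 + (m + 1)" by simp
  then show ?thesis unfolding tri_int by simp
qed

lemma tri_Suc_exp: "tri (int (Suc k) - int b) + b = tri (int k - int b) + Suc k"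
proof -
  have "int (Suc k) - int b = (int k - int b) + 1" by simp
  then have "int (tri (int (Suc k) - int b)) = int (tri (int k - int b)) + (int k - int b) + 1"
    using tri_step[of "int k - int b"] by (simp only:)
  then show ?thesis by linarith
qed

lemma tri_0_exp: "tri (- int b) + b = tri (- 1 - int b)"
proof -
  have "int (tri (- 1 - int b + 1)) = int (tri (- 1 - int b)) + (- 1 - int b) + 1"
    by (rule tri_step)
  moreover have "- 1 - int b + 1 = - int b" by simp
  ultimately show ?thesis by (simp only:)
qed

lemma tri_a_exp: "k \<le> a \<Longrightarrow> tri (int (Suc k)) + (a - k) = tri (int k) + Suc a"
proof -
  assume "k \<le> a"
  have "int (tri (int k + 1)) = int (tri (int k)) + int k + 1" by (rule tri_step)
  moreover have "int (Suc k) = int k + 1" by simp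
  ultimately have "int (tri (int (Suc k))) = int (tri (int k)) + int k + 1" by (simp only:)
  then show ?thesis using \<open>k \<le> a\<close> by linarith
qed

lemma jtp0: "(\<Prod>i<a. 1 + z * q ^ Suc i) = (\<Sum>k\<le>a. z ^ k * q ^ tri (int k) * gb q a k)"
proof (induction a)
  case 0
  then show ?case by (simp add: tri_def)
next
  case (Suc a)
  let ?f = "\<lambda>k. z ^ k * q ^ tri (int k) * gb q a k"
  have "(\<Sum>k\<le>Suc a. z ^ k * q ^ tri (int k) * gb q (Suc a) k)
      = 1 + (\<Sum>k\<le>a. z ^ Suc k * q ^ tri (int (Suc k)) * gb q (Suc a) (Suc k))"
    by (simp only: sum.atMost_Suc_shift) (simp add: tri_def)
  also have "\<dots> = 1 + (\<Sum>k\<le>a. ?f (Suc k)) + (\<Sum>k\<le>a. z ^ Suc k * (q ^ tri (int (Suc k)) * q ^ (a - k)) * gb q a k)"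
    by (simp add: gb_SS sum.distrib algebra_simps)
  also have "1 + (\<Sum>k\<le>a. ?f (Suc k)) = (\<Sum>k\<le>Suc a. ?f k)"
    by (simp only: sum.atMost_Suc_shift) (simp add: tri_def)
  also have "\<dots> = (\<Sum>k\<le>a. ?f k)"
    using gb_zero[of a "Suc a" q] by simp
  also have "(\<Sum>k\<le>a. z ^ Suc k * (q ^ tri (int (Suc k)) * q ^ (a - k)) * gb q a k)
      = (\<Sum>k\<le>a. ?f k * (z * q ^ Suc a))"
  proof (rule sum.cong)
    fix k assume "k \<in> {..a}"
    then have "q ^ tri (int (Suc k)) * q ^ (a - k) = q ^ tri (int k) * q ^ Suc a"
      using tri_a_exp[of k a] by (simp only: power_add[symmetric]) simp
    then show "z ^ Suc k * (q ^ tri (int (Suc k)) * q ^ (a - k)) * gb q a k = ?f k * (z * q ^ Suc a)"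
      by (simp add: algebra_simps)
  qed simp
  also have "(\<Sum>k\<le>a. ?f k * (z * q ^ Suc a)) = (\<Sum>k\<le>a. ?f k) * (z * q ^ Suc a)"
    by (simp only: sum_distrib_right)
  finally have e: "(\<Sum>k\<le>Suc a. z ^ k * q ^ tri (int k) * gb q (Suc a) k) = (\<Sum>k\<le>a. ?f k) * (1 + z * q ^ Suc a)"
    by (simp only: distrib_left mult_1_right)
  show ?case unfolding e prod.lessThan_Suc Suc.IH ..
qed

lemma jtp: "(\<Prod>i<a. 1 + z * q ^ Suc i) * (\<Prod>i<b. z + q ^ i)
    = (\<Sum>k\<le>a + b. z ^ k * q ^ tri (int k - int b) * gb q (a + b) k)"
proof (induction b)
  case 0
  then show ?case using jtp0[where a=a and z=z and q=q] by simp
next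
  case (Suc b)
  define N where "N = a + b"
  let ?S = "\<Sum>k\<le>N. z ^ k * q ^ tri (int k - int b) * gb q N k"
  let ?g = "\<lambda>k. z ^ k * (q ^ tri (int k - int b) * q ^ b) * gb q N k"
  have sh: "\<And>k. int (Suc k) - int (Suc b) = int k - int b" by simp
  have "(\<Sum>k\<le>a + Suc b. z ^ k * q ^ tri (int k - int (Suc b)) * gb q (a + Suc b) k)
      = (\<Sum>k\<le>Suc N. z ^ k * q ^ tri (int k - int (Suc b)) * gb q (Suc N) k)"
    by (simp add: N_def)
  also have "\<dots> = q ^ tri (- 1 - int b) + (\<Sum>k\<le>N. z ^ Suc k * q ^ tri (int k - int b) * gb q (Suc N) (Suc k))"
    by (simp only: sum.atMost_Suc_shift sh) (simp add: algebra_simps)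
  also have "\<dots> = q ^ tri (- 1 - int b) + (\<Sum>k\<le>N. z ^ Suc k * q ^ tri (int k - int b) * q ^ Suc k * gb q N (Suc k))
       + z * ?S"
    by (simp add: gb_pascal2 sum.distrib sum_distrib_left algebra_simps)
  also have "q ^ tri (- 1 - int b) = ?g 0"
    using tri_0_exp[of b] by (simp add: power_add[symmetric])
  also have "(\<Sum>k\<le>N. z ^ Suc k * q ^ tri (int k - int b) * q ^ Suc k * gb q N (Suc k)) = (\<Sum>k\<le>N. ?g (Suc k))"
  proof (rule sum.cong)
    fix k assume "k \<in> {..N}"
    have "q ^ tri (int k - int b) * q ^ Suc k = q ^ tri (int (Suc k) - int b) * q ^ b"
      using tri_Suc_exp[of k b] by (simp only: power_add[symmetric])
    then show "z ^ Suc k * q ^ tri (int k - int b) * q ^ Suc k * gb q N (Suc k) = ?g (Suc k)"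
      by (simp add: algebra_simps)
  qed simp
  also have "?g 0 + (\<Sum>k\<le>N. ?g (Suc k)) = (\<Sum>k\<le>Suc N. ?g k)"
    by (simp only: sum.atMost_Suc_shift)
  also have "\<dots> = (\<Sum>k\<le>N. ?g k)"
    using gb_zero[of N "Suc N" q] by simp
  also have "\<dots> = ?S * q ^ b"
    by (simp add: sum_distrib_left algebra_simps)
  finally have e: "(\<Sum>k\<le>a + Suc b. z ^ k * q ^ tri (int k - int (Suc b)) * gb q (a + Suc b) k) = ?S * (z + q ^ b)"
    by (simp add: algebra_simps)
  show ?case unfolding e prod.lessThan_Suc using Suc.IH unfolding N_def by (simp add: algebra_simps)
qed


definition w :: complex where "w = Complex (-1/2) (sqrt 3 / 2)"

lemma w_sq: "w * w = - 1 - w"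
  by (simp add: w_def complex_eq_iff field_simps)

lemma w_cube: "w ^ 3 = 1"
proof -
  have "w ^ 3 = w * (w * w)" by (simp add: power3_eq_cube)
  also have "\<dots> = - w - w * w" by (simp add: w_sq algebra_simps)
  also have "\<dots> = 1" by (simp add: w_sq)
  finally show ?thesis .
qed

lemma w_pow_mod: "w ^ n = w ^ (n mod 3)"
proof -
  have "w ^ n = w ^ (3 * (n div 3) + n mod 3)" by simp
  also have "\<dots> = (w ^ 3) ^ (n div 3) * w ^ (n mod 3)" by (simp only: power_add power_mult)
  finally show ?thesis by (simp add: w_cube)
qed

lemma w_ne: "w - w ^ 2 \<noteq> 0"
  by (simp add: w_def complex_eq_iff power2_eq_square)

lemma leg3: "Legendre m 3 = (if m mod 3 = 0 then 0 else if m mod 3 = 1 then 1 else -1)"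
proof -
  have c: "[m = 0] (mod 3) \<longleftrightarrow> m mod 3 = 0" by (simp add: cong_def)
  have q1: "m mod 3 = 1 \<Longrightarrow> QuadRes 3 m"
    unfolding QuadRes_def cong_def by (rule exI[of _ 1]) simp
  have q2: "m mod 3 = 2 \<Longrightarrow> \<not> QuadRes 3 m"
  proof
    assume m: "m mod 3 = 2" and "QuadRes 3 m"
    then obtain y where y: "y ^ 2 mod 3 = m mod 3" unfolding QuadRes_def cong_def by auto
    have "y ^ 2 mod 3 = (y mod 3) ^ 2 mod 3" by (simp add: power_mod)
    moreover have "y mod 3 = 0 \<or> y mod 3 = 1 \<or> y mod 3 = 2" by presburger
    ultimately have "y ^ 2 mod 3 \<noteq> 2" by (elim disjE) simp_all
    then show False using y m by simp
  qed
  have "m mod 3 = 0 \<or> m mod 3 = 1 \<or> m mod 3 = 2" by presburger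
  then show ?thesis
  proof (elim disjE)
    assume h: "m mod 3 = 0" then show ?thesis unfolding Legendre_def c by simp
  next
    assume h: "m mod 3 = 1" then show ?thesis unfolding Legendre_def c using q1 by simp
  next
    assume h: "m mod 3 = 2" then show ?thesis unfolding Legendre_def c using q2 by simp
  qed
qed

lemma modlem: "(2 * L + k) mod 3 = (2 * (L mod 3) + k mod 3) mod (3::nat)"
proof -
  have "(2 * (L mod 3) + k mod 3) mod (3::nat) = ((2 * (L mod 3)) mod 3 + k mod 3) mod 3" by (simp add: mod_add_left_eq)
  also have "(2 * (L mod 3)) mod 3 = (2 * L) mod (3::nat)" by (simp add: mod_mult_right_eq)
  finally show ?thesis by (simp add: mod_add_eq)
qed

lemma chi_w: "(w - w ^ 2) * of_int (Legendre (int k - int L) 3) = w ^ (2 * L) * w ^ k - w ^ L * (w ^ 2) ^ k"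
proof -
  define u where "u = k mod 3"
  define v where "v = L mod 3"
  have r1: "w ^ (2 * L) * w ^ k = w ^ ((2 * v + u) mod 3)"
  proof -
    have "w ^ (2 * L) * w ^ k = w ^ ((2 * L + k) mod 3)" by (simp only: power_add[symmetric]) (rule w_pow_mod)
    also have "(2 * L + k) mod 3 = (2 * v + u) mod 3" unfolding u_def v_def by (rule modlem)
    finally show ?thesis .
  qed
  have r2: "w ^ L * (w ^ 2) ^ k = w ^ ((v + 2 * u) mod 3)"
  proof -
    have "w ^ L * (w ^ 2) ^ k = w ^ ((L + 2 * k) mod 3)" by (simp only: power_add[symmetric] power_mult[symmetric]) (rule w_pow_mod)
    also have "(L + 2 * k) mod 3 = (v + 2 * u) mod 3" unfolding u_def v_def using modlem[of k L] by (simp only: add.commute)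
    finally show ?thesis .
  qed
  have r3: "(int k - int L) mod 3 = (int u - int v) mod 3" unfolding u_def v_def by (simp add: of_nat_mod mod_diff_eq)
  have "u < 3" "v < 3" unfolding u_def v_def by auto
  then have "u = 0 \<or> u = 1 \<or> u = 2" "v = 0 \<or> v = 1 \<or> v = 2" by auto
  then show ?thesis unfolding r1 r2 leg3 r3
    by (elim disjE) (simp_all add: algebra_simps power2_eq_square)
qed


lemma qbinom_gb: "qpoch q q N \<noteq> 0 \<Longrightarrow> k \<le> N \<Longrightarrow> qbinom q (int N) (int k) = gb q N k"
proof -
  assume nz: "qpoch q q N \<noteq> 0" and k: "k \<le> N"
  have p: "gb q N k * qpoch q q k * qpoch q q (N - k) = qpoch q q N" using gb_prod[OF k] .
  then have d: "qpoch q q k * qpoch q q (N - k) \<noteq> 0" using nz by auto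
  have "nat (int N - int k) = N - k" using k by simp
  then have "qbinom q (int N) (int k) = qpoch q q N / (qpoch q q k * qpoch q q (N - k))"
    unfolding qbinom_def using k by simp
  also have "\<dots> = gb q N k" using d p[symmetric] by (simp add: field_simps)
  finally show ?thesis .
qed

lemma Fz:
  fixes z q :: complex
  assumes zz: "z * z = - 1 - z"
  shows "(\<Prod>i<n. 1 + z * q ^ Suc i) * (\<Prod>i<n + 4. z + q ^ i)
    = z ^ n * (\<Prod>i<n. 1 - q ^ Suc i + q ^ Suc i * q ^ Suc i)
      * ((1 + z) * ((z + q ^ (n + 1)) * (z + q ^ (n + 2)) * (z + q ^ (n + 3))))"
proof -
  have p1: "(\<Prod>i<n + 4. z + q ^ i) = (z + 1) * (\<Prod>i<n. z + q ^ Suc i) * ((z + q ^ (n + 1)) * (z + q ^ (n + 2)) * (z + q ^ (n + 3)))"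
  proof -
    have "n + 4 = Suc (Suc (Suc (Suc n)))" by simp
    then have "(\<Prod>i<n + 4. z + q ^ i) = (\<Prod>i<Suc n. z + q ^ i) * (z + q ^ Suc n) * (z + q ^ Suc (Suc n)) * (z + q ^ Suc (Suc (Suc n)))"
      by (simp only: prod.lessThan_Suc)
    also have "(\<Prod>i<Suc n. z + q ^ i) = (z + 1) * (\<Prod>i<n. z + q ^ Suc i)"
      by (simp only: prod.lessThan_Suc_shift) simp
    finally show ?thesis by (simp add: algebra_simps numeral_3_eq_3)
  qed
  have p2: "(1 + z * x) * (z + x) = z * (1 - x + x * x)" for x :: complex
  proof -
    have "(1 + z * x) * (z + x) = z + x + (z * z) * x + z * x * x" by (simp add: algebra_simps)
    also have "\<dots> = z * (1 - x + x * x)" unfolding zz by (simp add: algebra_simps)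
    finally show ?thesis .
  qed
  have p3: "(\<Prod>i<n. 1 + z * q ^ Suc i) * (\<Prod>i<n. z + q ^ Suc i) = z ^ n * (\<Prod>i<n. 1 - q ^ Suc i + q ^ Suc i * q ^ Suc i)"
  proof -
    have "(\<Prod>i<n. 1 + z * q ^ Suc i) * (\<Prod>i<n. z + q ^ Suc i) = (\<Prod>i<n. (1 + z * q ^ Suc i) * (z + q ^ Suc i))"
      by (simp only: prod.distrib)
    also have "\<dots> = (\<Prod>i<n. z * (1 - q ^ Suc i + q ^ Suc i * q ^ Suc i))"
      by (simp only: p2)
    also have "\<dots> = z ^ n * (\<Prod>i<n. 1 - q ^ Suc i + q ^ Suc i * q ^ Suc i)"
      by (simp add: prod.distrib)
    finally show ?thesis .
  qed
  show ?thesis unfolding p1 using p3 by (simp add: algebra_simps)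
qed

lemma cubic:
  fixes u v x y t :: complex
  assumes "u ^ 3 = 1" "v ^ 3 = 1" "u * u = v" "v * v = u"
  shows "(v + x) * (v + y) * (v + t) - (u + x) * (u + y) * (u + t) = (u - v) * ((x + y + t) - (x * y + x * t + y * t))"
proof -
  have e: "(s + x) * (s + y) * (s + t) = s ^ 3 + (s * s) * (x + y + t) + s * (x * y + x * t + y * t) + x * y * t" for s :: complex
    by (simp add: algebra_simps power3_eq_cube)
  show ?thesis unfolding e assms by (simp add: algebra_simps)
qed


lemma w4: "w ^ 2 * w ^ 2 = w"
proof -
  have "w ^ 2 * w ^ 2 = w ^ 3 * w" by (simp add: power2_eq_square power3_eq_cube)
  then show ?thesis by (simp add: w_cube)
qed

lemma wsum: "w + w ^ 2 = -1"
  using w_sq by (simp add: power2_eq_square algebra_simps)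

lemma core:
  fixes q :: complex and n :: nat
  assumes L: "L = Suc (Suc n)"
    and nz: "qpoch q q (2 * L) \<noteq> 0" and nz2: "qpoch (-1) q (L - 1) \<noteq> 0"
  shows "(\<Sum>j\<in>{-int L..int L}. of_int (Legendre j 3) * q ^ nat ((j - 1) * (j - 2) div 2)
            * qbinom q (2 * int L) (int L + j))
       = qpoch (-1) (q ^ 3) (L - 1) / qpoch (-1) q (L - 1) * q ^ (L - 1)
                        * ((1 - q ^ 3) / (1 - q)) * (1 - q ^ L)"
proof -
  define E where "E k = q ^ tri (int k - int (L + 2)) * gb q (2 * L) k" for k
  define C where "C = (\<Prod>i<n. 1 - q ^ Suc i + q ^ Suc i * q ^ Suc i)"
  define X where "X z = (z + q ^ (n + 1)) * (z + q ^ (n + 2)) * (z + q ^ (n + 3))" for z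
  define x where "x = q ^ (n + 1)"
  define S where "S = (\<Sum>j\<in>{-int L..int L}. of_int (Legendre j 3) * q ^ nat ((j - 1) * (j - 2) div 2)
            * qbinom q (2 * int L) (int L + j))"
  have A: "S = (\<Sum>k\<le>2 * L. of_int (Legendre (int k - int L) 3) * E k)"
  proof -
    have "S = (\<Sum>k\<le>2 * L. (\<lambda>j. of_int (Legendre j 3) * q ^ nat ((j - 1) * (j - 2) div 2)
            * qbinom q (2 * int L) (int L + j)) (int k - int L))"
      unfolding S_def
      by (rule sum.reindex_bij_witness[of _ "\<lambda>k. int k - int L" "\<lambda>j. nat (j + int L)"]) auto
    also have "\<dots> = (\<Sum>k\<le>2 * L. of_int (Legendre (int k - int L) 3) * E k)"
    proof (rule sum.cong)
      fix k assume k: "k \<in> {..2 * L}"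
      have e1: "nat ((int k - int L - 1) * (int k - int L - 2) div 2) = tri (int k - int (L + 2))"
        unfolding tri_def by (simp add: algebra_simps)
      have e2: "qbinom q (2 * int L) (int L + (int k - int L)) = gb q (2 * L) k"
        using qbinom_gb[OF nz, of k] k by simp
      show "(\<lambda>j. of_int (Legendre j 3) * q ^ nat ((j - 1) * (j - 2) div 2)
            * qbinom q (2 * int L) (int L + j)) (int k - int L) = of_int (Legendre (int k - int L) 3) * E k"
        unfolding E_def using e1 e2 by simp
    qed simp
    finally show ?thesis .
  qed
  have jt: "(\<Sum>k\<le>2 * L. z ^ k * E k) = z ^ n * C * ((1 + z) * X z)" if zz: "z * z = - 1 - z" for z
  proof -
    have "(\<Sum>k\<le>2 * L. z ^ k * E k) = (\<Sum>k\<le>n + (n + 4). z ^ k * q ^ tri (int k - int (n + 4)) * gb q (n + (n + 4)) k)"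
    proof -
      have h1: "2 * L = n + (n + 4)" and h2: "L + 2 = n + 4" using L by simp_all
      show ?thesis unfolding E_def h1 h2 by (simp only: mult.assoc)
    qed
    also have "\<dots> = (\<Prod>i<n. 1 + z * q ^ Suc i) * (\<Prod>i<n + 4. z + q ^ i)"
      by (rule jtp[symmetric])
    also have "\<dots> = z ^ n * C * ((1 + z) * X z)"
      unfolding C_def X_def by (rule Fz[OF zz])
    finally show ?thesis .
  qed
  have B: "(w - w ^ 2) * S = w ^ (2 * L) * (\<Sum>k\<le>2 * L. w ^ k * E k) - w ^ L * (\<Sum>k\<le>2 * L. (w ^ 2) ^ k * E k)"
  proof -
    have "(w - w ^ 2) * S = (\<Sum>k\<le>2 * L. ((w - w ^ 2) * of_int (Legendre (int k - int L) 3)) * E k)"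
      unfolding A sum_distrib_left by (simp only: mult.assoc)
    also have "\<dots> = (\<Sum>k\<le>2 * L. (w ^ (2 * L) * w ^ k - w ^ L * (w ^ 2) ^ k) * E k)"
      by (simp only: chi_w)
    also have "\<dots> = (\<Sum>k\<le>2 * L. w ^ (2 * L) * (w ^ k * E k) - w ^ L * ((w ^ 2) ^ k * E k))"
      by (simp only: left_diff_distrib mult.assoc)
    also have "\<dots> = w ^ (2 * L) * (\<Sum>k\<le>2 * L. w ^ k * E k) - w ^ L * (\<Sum>k\<le>2 * L. (w ^ 2) ^ k * E k)"
      by (simp only: sum_subtractf sum_distrib_left)
    finally show ?thesis .
  qed
  have ww1: "w * w = - 1 - w" by (rule w_sq)
  have ww2: "w ^ 2 * w ^ 2 = - 1 - w ^ 2" using w4 wsum by (simp add: algebra_simps)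
  have p1: "w ^ (2 * L) * w ^ n = w"
  proof -
    have "w ^ (2 * L) * w ^ n = w ^ ((2 * L + n) mod 3)" by (simp only: power_add[symmetric]) (rule w_pow_mod)
    also have "(2 * L + n) mod 3 = 1" unfolding L by presburger
    finally show ?thesis by simp
  qed
  have p2: "w ^ L * (w ^ 2) ^ n = w ^ 2"
  proof -
    have "w ^ L * (w ^ 2) ^ n = w ^ ((L + 2 * n) mod 3)" by (simp only: power_add[symmetric] power_mult[symmetric]) (rule w_pow_mod)
    also have "(L + 2 * n) mod 3 = 2" unfolding L by presburger
    finally show ?thesis .
  qed
  have f1: "w * (1 + w) = -1" using wsum by (simp add: power2_eq_square algebra_simps)
  have f2: "w ^ 2 * (1 + w ^ 2) = -1" using wsum w4 by (simp add: algebra_simps)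
  have "(w - w ^ 2) * S = (w ^ (2 * L) * w ^ n) * C * ((1 + w) * X w) - (w ^ L * (w ^ 2) ^ n) * C * ((1 + w ^ 2) * X (w ^ 2))"
    unfolding B jt[OF ww1] jt[OF ww2] by (simp add: algebra_simps)
  also have "\<dots> = C * (X (w ^ 2) - X w)"
  proof -
    have "w * C * ((1 + w) * X w) = (w * (1 + w)) * (C * X w)" by (simp only: mult_ac)
    moreover have "w ^ 2 * C * ((1 + w ^ 2) * X (w ^ 2)) = (w ^ 2 * (1 + w ^ 2)) * (C * X (w ^ 2))" by (simp only: mult_ac)
    ultimately show ?thesis unfolding p1 p2 f1 f2 by (simp add: algebra_simps)
  qed
  also have "X (w ^ 2) - X w = (w - w ^ 2) * ((x + x * q + x * q * q) - (x * (x * q) + x * (x * q * q) + (x * q) * (x * q * q)))"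
  proof -
    have "X (w ^ 2) - X w = (w - w ^ 2) * ((q ^ (n + 1) + q ^ (n + 2) + q ^ (n + 3)) - (q ^ (n + 1) * q ^ (n + 2) + q ^ (n + 1) * q ^ (n + 3) + q ^ (n + 2) * q ^ (n + 3)))"
    proof -
      have "(w ^ 2) ^ 3 = (w ^ 3) ^ 2" by (metis power_mult mult.commute)
      then have a2: "(w ^ 2) ^ 3 = 1" by (simp add: w_cube)
      have a3: "w * w = w ^ 2" by (simp add: power2_eq_square)
      show ?thesis unfolding X_def by (rule cubic[OF w_cube a2 a3 w4])
    qed
    then show ?thesis unfolding x_def by (simp add: numeral_3_eq_3)
  qed
  finally have "(w - w ^ 2) * S = (w - w ^ 2) * (C * ((x + x * q + x * q * q) - (x * (x * q) + x * (x * q * q) + (x * q) * (x * q * q))))"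
    by (simp add: algebra_simps)
  then have "S = C * ((x + x * q + x * q * q) - (x * (x * q) + x * (x * q * q) + (x * q) * (x * q * q)))"
    using w_ne by simp
  then have S: "S = C * (x * (1 + q + q * q) * (1 - x * q))"
    by (simp add: algebra_simps)
  have q1: "1 - q \<noteq> 0" using nz unfolding L qpoch_def by (auto simp: lessThan_Suc_eq_insert_0)
  have r1: "(1 - q ^ 3) / (1 - q) = 1 + q + q * q"
    using q1 by (simp add: field_simps power3_eq_cube algebra_simps)
  have r2: "qpoch (-1) (q ^ 3) (L - 1) = qpoch (-1) q (L - 1) * C"
  proof -
    have "qpoch (-1) (q ^ 3) (L - 1) = (\<Prod>i<Suc n. 1 + (q ^ 3) ^ i)" unfolding L qpoch_def by simp
    also have "\<dots> = 2 * (\<Prod>i<n. 1 + (q ^ 3) ^ Suc i)" by (simp only: prod.lessThan_Suc_shift) simp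
    also have "\<dots> = 2 * (\<Prod>i<n. (1 + q ^ Suc i) * (1 - q ^ Suc i + q ^ Suc i * q ^ Suc i))"
    proof -
      have "1 + (q ^ 3) ^ Suc i = (1 + q ^ Suc i) * (1 - q ^ Suc i + q ^ Suc i * q ^ Suc i)" for i
      proof -
        have "(q ^ 3) ^ Suc i = (q ^ Suc i) ^ 3" by (metis power_mult mult.commute)
        then have "(q ^ 3) ^ Suc i = q ^ Suc i * q ^ Suc i * q ^ Suc i" by (simp only: power3_eq_cube)
        then show ?thesis by (simp add: algebra_simps)
      qed
      then show ?thesis by simp
    qed
    also have "\<dots> = 2 * (\<Prod>i<n. 1 + q ^ Suc i) * C" unfolding C_def by (simp add: prod.distrib)
    finally have a: "qpoch (-1) (q ^ 3) (L - 1) = 2 * (\<Prod>i<n. 1 + q ^ Suc i) * C" .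
    have "qpoch (-1) q (L - 1) = 2 * (\<Prod>i<n. 1 + q ^ Suc i)" unfolding L qpoch_def
      by (simp only: diff_Suc_1 prod.lessThan_Suc_shift) simp
    then show ?thesis using a by simp
  qed
  have "qpoch (-1) (q ^ 3) (L - 1) / qpoch (-1) q (L - 1) * q ^ (L - 1) * ((1 - q ^ 3) / (1 - q)) * (1 - q ^ L)
     = C * (x * (1 + q + q * q) * (1 - x * q))"
    unfolding r1 r2 using nz2 unfolding x_def L by (simp add: algebra_simps)
  then show ?thesis using S unfolding S_def by simp
qed

theorem theorem2p1:
  fixes q :: complex and L :: nat
  assumes "qpoch q q (2 * L) \<noteq> 0"
    and "L > 0 \<Longrightarrow> qpoch (-1) q (L - 1) \<noteq> 0"
  shows "(\<Sum>j\<in>{-int L..int L}. of_int (Legendre j 3) * q ^ nat ((j - 1) * (j - 2) div 2)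
            * qbinom q (2 * int L) (int L + j))
       = (if L > 0 then qpoch (-1) (q ^ 3) (L - 1) / qpoch (-1) q (L - 1) * q ^ (L - 1)
                        * ((1 - q ^ 3) / (1 - q)) * (1 - q ^ L)
          else 0)"
proof (cases L)
  case 0
  then show ?thesis by (simp add: leg3)
next
  case (Suc m)
  note Lm = Suc
  show ?thesis
  proof (cases m)
    case 0
    then have L1: "L = 1" using Lm by simp
    have nz: "qpoch q q 2 \<noteq> 0" using assms(1) L1 by simp
    have "qpoch q q 2 = (1 - q) * (1 - q * q)" by (simp add: qpoch_def numeral_2_eq_2)
    then have q1: "1 - q \<noteq> 0" using nz by auto
    have b0: "qbinom q 2 0 = 1" using qbinom_gb[OF nz, of 0] by simp
    have g11: "gb q 1 1 = 1" using gb_SS[of q 0 0] by simp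
    have g22: "gb q 2 2 = 1" using gb_SS[of q 1 1] gb_zero[of 1 2 q] g11 by (simp add: numeral_2_eq_2)
    have b2: "qbinom q 2 2 = 1" using qbinom_gb[OF nz, of 2] g22 by simp
    have set: "{-1..1::int} = {-1, 0, 1}" by auto
    have "(\<Sum>j\<in>{-int L..int L}. of_int (Legendre j 3) * q ^ nat ((j - 1) * (j - 2) div 2)
            * qbinom q (2 * int L) (int L + j)) = 1 - q ^ 3"
      unfolding L1 using b0 b2 by (simp add: set leg3)
    moreover have "qpoch (-1) (q ^ 3) (L - 1) / qpoch (-1) q (L - 1) * q ^ (L - 1)
                        * ((1 - q ^ 3) / (1 - q)) * (1 - q ^ L) = 1 - q ^ 3"
      unfolding L1 using q1 by (simp add: qpoch_def)
    ultimately show ?thesis using L1 by simp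
  next
    case (Suc n)
    then have L: "L = Suc (Suc n)" using Lm by simp
    have nz2: "qpoch (-1) q (L - 1) \<noteq> 0" using assms(2) L by simp
    show ?thesis using core[OF L assms(1) nz2] L by simp
  qed
qed

end
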